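(* Let $P_0>0$, $T>0$, $\sigma>0$, $\tau>0$, $w\in\mathbb R$, $P_t=\frac{P_0}{1+P_0t}$, $\alpha(t)=-\frac{(1+P_0t)(T-t)}{1+P_0(2T-t)}$, $\gamma(t)=\frac12\log\!\big(\frac{(1+P_0t)(1+P_0(2T-t))}{(1+P_0T)^2}\big)$, $\eta(t)=\frac{\tau}{2}\int_t^T\alpha(s)ds$, $\zeta(t)=-\int_t^T\big(\frac{\tau}{2}[\log\frac{\pi\tau}{\sigma^2}-\gamma(s)]-P_s^2\eta(s)\big)ds$ ($\pi=3.14159\ldots$). Then $$V(t,x,m)=e^{\alpha(t)m^2+\gamma(t)}(x-w)^2+\eta(t)m^2+\zeta(t)$$ satisfies, for all $t\in[0,T]$, $x,m\in\mathbb R$, $$0=V_t+\frac{P_t^2}{2}V_{mm}-\frac{(mV_x+P_tV_{xm})^2}{2V_{xx}}-\frac{\tau}{2}\log\!\Big(\frac{2\pi\tau}{\sigma^2V_{xx}}\Big),\qquad V(T,x,m)=(x-w)^2.$$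
   Context: This is the reduced HJB equation of entropy-regularized mean–variance control under Bayesian drift uncertainty, written along the deterministic posterior-variance path $P=P_t$ (which satisfies $dP_t/dt=-P_t^2$); $x$ is discounted wealth and $m$ the posterior mean of the unknown Sharpe ratio. *)

theory Defs
  imports "HOL-Analysis.Analysis"
begin

definition Pt :: "real \<Rightarrow> real \<Rightarrow> real" where
  "Pt P0 t = P0 / (1 + P0 * t)"

definition alpha :: "real \<Rightarrow> real \<Rightarrow> real \<Rightarrow> real" where
  "alpha P0 T t = - ((1 + P0 * t) * (T - t)) / (1 + P0 * (2 * T - t))"

definition gamma :: "real \<Rightarrow> real \<Rightarrow> real \<Rightarrow> real" where
  "gamma P0 T t = (1/2) * ln (((1 + P0 * t) * (1 + P0 * (2 * T - t))) / (1 + P0 * T)^2)"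

definition eta :: "real \<Rightarrow> real \<Rightarrow> real \<Rightarrow> real \<Rightarrow> real" where
  "eta P0 T tau t = (tau / 2) * integral {t..T} (alpha P0 T)"

definition zeta :: "real \<Rightarrow> real \<Rightarrow> real \<Rightarrow> real \<Rightarrow> real \<Rightarrow> real" where
  "zeta P0 T tau sig t =
     - integral {t..T} (\<lambda>s. (tau / 2) * (ln (pi * tau / sig^2) - gamma P0 T s)
                             - (Pt P0 s)^2 * eta P0 T tau s)"

definition Vfun :: "real \<Rightarrow> real \<Rightarrow> real \<Rightarrow> real \<Rightarrow> real \<Rightarrow> real \<Rightarrow> real \<Rightarrow> real \<Rightarrow> real" where
  "Vfun P0 T tau sig w t x m =
     exp (alpha P0 T t * m^2 + gamma P0 T t) * (x - w)^2 + eta P0 T tau t * m^2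
     + zeta P0 T tau sig t"

end

theory Submission
  imports Defs
begin

lemma deriv_int_upper:
  fixes f :: "real \<Rightarrow> real"
  assumes c: "continuous_on {a..b} f" and t: "t \<in> {a..b}"
  shows "((\<lambda>s. integral {s..b} f) has_real_derivative (- f t)) (at t within {a..b})"
proof -
  have "((\<lambda>u. integral {a..u} f) has_vector_derivative f t) (at t within {a..b})"
    by (rule integral_has_vector_derivative[OF c t])
  then have "((\<lambda>u. integral {a..b} f - integral {a..u} f) has_vector_derivative (0 - f t)) (at t within {a..b})"
    by (intro has_vector_derivative_diff has_vector_derivative_const)
  then have "((\<lambda>u. integral {u..b} f) has_vector_derivative (0 - f t)) (at t within {a..b})"
  proof (rule has_vector_derivative_transform[OF t, rotated])
    fix u assume u: "u \<in> {a..b}"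
    have "integral {a..u} f + integral {u..b} f = integral {a..b} f"
      using u integrable_continuous_real[OF c] by (intro Henstock_Kurzweil_Integration.integral_combine) auto
    then show "integral {u..b} f = integral {a..b} f - integral {a..u} f" by simp
  qed
  then show ?thesis by (simp add: has_real_derivative_iff_has_vector_derivative)
qed


lemma alg: fixes u Dv s P0 :: real assumes "u > 0" "Dv > 0" "Dv = u + 2*P0* s"
  shows "((u - P0* s) * Dv - P0*u* s) / Dv^2 = 1 + 4 * (P0/u) * (- (u* s)/Dv) + 2 * (P0/u)^2 * (- (u* s)/Dv)^2"
proof -
  have "1 + 4 * (P0/u) * (- (u* s)/Dv) + 2 * (P0/u)^2 * (- (u* s)/Dv)^2 = 1 - 4*P0* s/Dv + 2*P0^2* s^2/Dv^2"
    using assms(1,2) by (simp add: field_simps power2_eq_square)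
  also have "\<dots> = (Dv^2 - 4*P0* s*Dv + 2*P0^2* s^2)/Dv^2" using assms(1,2) by (simp add: field_simps power2_eq_square)
  also have "Dv^2 - 4*P0* s*Dv + 2*P0^2* s^2 = (u - P0* s) * Dv - P0*u* s" unfolding assms(3) by (simp add: algebra_simps power2_eq_square)
  finally show ?thesis by simp
qed

lemma alg2: fixes u Dv s P0 :: real assumes "u > 0" "Dv > 0" "Dv = u + 2 * P0 * s"
  shows "(1/2) * (P0 / u - P0 / Dv) = - ((P0 / u)^2 * (- (u * s) / Dv))"
proof -
  have "(1/2) * (P0 / u - P0 / Dv) = P0 * (Dv - u) / (2 * u * Dv)" using assms(1,2) by (simp add: field_simps)
  also have "\<dots> = P0 * (2 * P0 * s) / (2 * u * Dv)" using assms(3) by simp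
  also have "\<dots> = P0 * P0 * s / (u * Dv)" by simp
  also have "\<dots> = - ((P0 / u)^2 * (- (u * s) / Dv))" using assms(1,2) by (simp add: field_simps power2_eq_square)
  finally show ?thesis .
qed

lemma alpha_eq: "alpha P0 T = (\<lambda>t. - ((1 + P0 * t) * (T - t)) / (1 + P0 * (2 * T - t)))"
  by (rule ext) (simp add: alpha_def)

lemma gamma_eq: "gamma P0 T = (\<lambda>t. (1/2) * ln (((1 + P0 * t) * (1 + P0 * (2 * T - t))) / (1 + P0 * T)^2))"
  by (rule ext) (simp add: gamma_def)

lemma alpha_deriv:
  assumes "P0 > 0" "T > 0" "t \<in> {0..T}"
  shows "(alpha P0 T has_real_derivative
     (1 + 4 * Pt P0 t * alpha P0 T t + 2 * (Pt P0 t)^2 * (alpha P0 T t)^2)) (at t)"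
proof -
  have u: "1 + P0 * t > 0" using assms by (simp add: add_pos_nonneg)
  have D: "1 + P0 * (2 * T - t) > 0" using assms by (simp add: add_pos_nonneg)
  have "(alpha P0 T has_real_derivative
     (((1 + P0*t) - P0*(T-t)) * (1 + P0 * (2 * T - t)) - P0*(1 + P0*t)*(T-t)) / (1 + P0 * (2 * T - t))^2) (at t)"
    unfolding alpha_eq using D
    by (auto intro!: derivative_eq_intros simp: field_simps power2_eq_square)
  moreover have "(((1 + P0*t) - P0*(T-t)) * (1 + P0 * (2 * T - t)) - P0*(1 + P0*t)*(T-t)) / (1 + P0 * (2 * T - t))^2
     = 1 + 4 * Pt P0 t * alpha P0 T t + 2 * (Pt P0 t)^2 * (alpha P0 T t)^2"
  proof -
    have A: "alpha P0 T t = - ((1 + P0 * t) * (T - t)) / (1 + P0 * (2 * T - t))" by (simp add: alpha_def)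
    have P: "Pt P0 t = P0 / (1 + P0 * t)" by (simp add: Pt_def)
    have E: "1 + P0 * (2 * T - t) = (1 + P0 * t) + 2 * P0 * (T - t)" by (simp add: algebra_simps)
    show ?thesis unfolding A P using alg[OF u D E] by simp
  qed
  ultimately show ?thesis by simp
qed

lemma gamma_deriv:
  assumes "P0 > 0" "T > 0" "t \<in> {0..T}"
  shows "(gamma P0 T has_real_derivative (- ((Pt P0 t)^2 * alpha P0 T t))) (at t)"
proof -
  have u: "1 + P0 * t > 0" using assms by (simp add: add_pos_nonneg)
  have D: "1 + P0 * (2 * T - t) > 0" using assms by (simp add: add_pos_nonneg)
  have W: "1 + P0 * T > 0" using assms by (simp add: add_pos_nonneg)
  have "(gamma P0 T has_real_derivative
     (1/2) * (P0 / (1 + P0 * t) - P0 / (1 + P0 * (2 * T - t)))) (at t)"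
    unfolding gamma_eq using u D W
    apply (intro derivative_eq_intros)
    apply (auto simp: power2_eq_square)
    apply (simp add: field_simps)
    done
  moreover have "(1/2) * (P0 / (1 + P0 * t) - P0 / (1 + P0 * (2 * T - t))) = - ((Pt P0 t)^2 * alpha P0 T t)"
  proof -
    have A: "alpha P0 T t = - ((1 + P0 * t) * (T - t)) / (1 + P0 * (2 * T - t))" by (simp add: alpha_def)
    have P: "Pt P0 t = P0 / (1 + P0 * t)" by (simp add: Pt_def)
    have E: "1 + P0 * (2 * T - t) = (1 + P0 * t) + 2 * P0 * (T - t)" by (simp add: algebra_simps)
    show ?thesis unfolding A P using alg2[OF u D E] by simp
  qed
  ultimately show ?thesis by simp
qed


lemma final_alg:
  fixes P a m E X tau L g e :: real
  shows "0 = ((1 + 4*P*a + 2*P^2*a^2)*m^2 + - (P^2*a))*E*X + (tau/2*(-a))*m^2 + (tau/2*(L - g) - P^2*e)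
     + P^2/2*((2*a + 4*a^2*m^2)*E*X + 2*e) - E*m^2*(1+2*P*a)^2*X - tau/2*(L - (a*m^2+g))"
  by (simp add: field_simps power2_eq_square)

lemma Pt_eq: "Pt P0 = (\<lambda>s. P0 / (1 + P0 * s))" by (rule ext) (simp add: Pt_def)

theorem mainTheorem7:
  fixes P0 T sig tau w :: real
  assumes "P0 > 0" and "T > 0" and "sig > 0" and "tau > 0"
  defines "V \<equiv> Vfun P0 T tau sig w"
  shows "(\<forall>t\<in>{0..T}. \<forall>x m::real.
           \<exists>Vx Vm :: real \<Rightarrow> real \<Rightarrow> real. \<exists>Vt Vxx Vmm Vxm :: real.
             ((\<lambda>s. V s x m) has_real_derivative Vt) (at t within {0..T}) \<and>
             (\<forall>y n. ((\<lambda>z. V t z n) has_real_derivative Vx y n) (at y)) \<and>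
             (\<forall>y n. ((\<lambda>k. V t y k) has_real_derivative Vm y n) (at n)) \<and>
             ((\<lambda>y. Vx y m) has_real_derivative Vxx) (at x) \<and>
             ((\<lambda>n. Vx x n) has_real_derivative Vxm) (at m) \<and>
             ((\<lambda>n. Vm x n) has_real_derivative Vmm) (at m) \<and>
             0 = Vt + (Pt P0 t)^2 / 2 * Vmm
                 - (m * Vx x m + Pt P0 t * Vxm)^2 / (2 * Vxx)
                 - tau / 2 * ln (2 * pi * tau / (sig^2 * Vxx)))
         \<and> (\<forall>x m. V T x m = (x - w)^2)"
proof
  have dA: "\<And>t. t \<in> {0..T} \<Longrightarrow> (alpha P0 T has_real_derivative
     (1 + 4 * Pt P0 t * alpha P0 T t + 2 * (Pt P0 t)^2 * (alpha P0 T t)^2)) (at t within {0..T})"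
    using alpha_deriv[OF assms(1,2)] by (rule has_field_derivative_at_within)
  have dG: "\<And>t. t \<in> {0..T} \<Longrightarrow> (gamma P0 T has_real_derivative (- ((Pt P0 t)^2 * alpha P0 T t))) (at t within {0..T})"
    using gamma_deriv[OF assms(1,2)] by (rule has_field_derivative_at_within)
  have cA: "continuous_on {0..T} (alpha P0 T)" by (rule DERIV_continuous_on[OF dA])
  have cG: "continuous_on {0..T} (gamma P0 T)" by (rule DERIV_continuous_on[OF dG])
  have dE: "\<And>t. t \<in> {0..T} \<Longrightarrow> (eta P0 T tau has_real_derivative (tau / 2 * (- alpha P0 T t))) (at t within {0..T})"
  proof -
    fix t assume t: "t \<in> {0..T}"
    have e: "eta P0 T tau = (\<lambda>s. tau / 2 * integral {s..T} (alpha P0 T))" by (rule ext) (simp add: eta_def)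
    show "(eta P0 T tau has_real_derivative (tau / 2 * (- alpha P0 T t))) (at t within {0..T})"
      unfolding e by (intro DERIV_cmult deriv_int_upper[OF cA t])
  qed
  have cE: "continuous_on {0..T} (eta P0 T tau)" by (rule DERIV_continuous_on[OF dE])
  define f where "f = (\<lambda>s. (tau / 2) * (ln (pi * tau / sig^2) - gamma P0 T s) - (Pt P0 s)^2 * eta P0 T tau s)"
  have nz: "\<And>s. s \<in> {0..T} \<Longrightarrow> 1 + P0 * s \<noteq> 0"
  proof -
    fix s :: real assume "s \<in> {0..T}"
    then have "P0 * s \<ge> 0" using assms(1) by simp
    then show "1 + P0 * s \<noteq> 0" by linarith
  qed
  have cP: "continuous_on {0..T} (Pt P0)" unfolding Pt_eq
    by (intro continuous_intros) (use nz in auto)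
  have cF: "continuous_on {0..T} f" unfolding f_def
    by (intro continuous_intros cG cE continuous_on_power[OF cP])
  have dZ: "\<And>t. t \<in> {0..T} \<Longrightarrow> (zeta P0 T tau sig has_real_derivative f t) (at t within {0..T})"
  proof -
    fix t assume t: "t \<in> {0..T}"
    have z: "zeta P0 T tau sig = (\<lambda>s. - integral {s..T} f)" by (rule ext) (simp add: zeta_def f_def)
    show "(zeta P0 T tau sig has_real_derivative f t) (at t within {0..T})"
      unfolding z using DERIV_minus[OF deriv_int_upper[OF cF t]] by simp
  qed
  show "\<forall>t\<in>{0..T}. \<forall>x m::real.
           \<exists>Vx Vm :: real \<Rightarrow> real \<Rightarrow> real. \<exists>Vt Vxx Vmm Vxm :: real.
             ((\<lambda>s. V s x m) has_real_derivative Vt) (at t within {0..T}) \<and>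
             (\<forall>y n. ((\<lambda>z. V t z n) has_real_derivative Vx y n) (at y)) \<and>
             (\<forall>y n. ((\<lambda>k. V t y k) has_real_derivative Vm y n) (at n)) \<and>
             ((\<lambda>y. Vx y m) has_real_derivative Vxx) (at x) \<and>
             ((\<lambda>n. Vx x n) has_real_derivative Vxm) (at m) \<and>
             ((\<lambda>n. Vm x n) has_real_derivative Vmm) (at m) \<and>
             0 = Vt + (Pt P0 t)^2 / 2 * Vmm
                 - (m * Vx x m + Pt P0 t * Vxm)^2 / (2 * Vxx)
                 - tau / 2 * ln (2 * pi * tau / (sig^2 * Vxx))"
  proof (intro ballI allI)
    fix t x m :: real assume t: "t \<in> {0..T}"
    define a where "a = alpha P0 T t"
    define g where "g = gamma P0 T t"
    define e where "e = eta P0 T tau t"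
    define P where "P = Pt P0 t"
    define E where "E = exp (a * m^2 + g)"
    define L where "L = ln (pi * tau / sig^2)"
    define Vx where "Vx = (\<lambda>y n. exp (a * n^2 + g) * (2 * (y - w)))"
    define Vm where "Vm = (\<lambda>y n. exp (a * n^2 + g) * (2 * a * n) * (y - w)^2 + e * (2 * n))"
    define Vt where "Vt = ((1 + 4*P*a + 2*P^2*a^2)*m^2 + - (P^2*a))*E*(x-w)^2 + (tau/2*(-a))*m^2 + (tau/2*(L - g) - P^2*e)"
    define Vxx where "Vxx = 2 * E"
    define Vxm where "Vxm = 4 * a * m * E * (x - w)"
    define Vmm where "Vmm = (2*a + 4*a^2*m^2)*E*(x-w)^2 + 2*e"
    have Epos: "E > 0" unfolding E_def by simp
    have h1: "((\<lambda>s. V s x m) has_real_derivative Vt) (at t within {0..T})"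
      unfolding V_def Vfun_def
      apply (rule derivative_eq_intros dA[OF t] dG[OF t] dE[OF t] dZ[OF t] refl)+
      apply (simp add: Vt_def a_def g_def e_def P_def E_def L_def f_def algebra_simps power2_eq_square)
      done
    have h2: "\<forall>y n. ((\<lambda>z. V t z n) has_real_derivative Vx y n) (at y)"
      unfolding V_def Vfun_def Vx_def a_def g_def
      by (auto intro!: derivative_eq_intros)
    have h3: "\<forall>y n. ((\<lambda>k. V t y k) has_real_derivative Vm y n) (at n)"
      unfolding V_def Vfun_def Vm_def a_def g_def e_def
      by (auto intro!: derivative_eq_intros)
    have h4: "((\<lambda>y. Vx y m) has_real_derivative Vxx) (at x)"
      unfolding Vx_def Vxx_def E_def
      by (auto intro!: derivative_eq_intros)
    have h5: "((\<lambda>n. Vx x n) has_real_derivative Vxm) (at m)"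
      unfolding Vx_def Vxm_def E_def
      by (auto intro!: derivative_eq_intros)
    have h6: "((\<lambda>n. Vm x n) has_real_derivative Vmm) (at m)"
      unfolding Vm_def Vmm_def E_def
      by (auto intro!: derivative_eq_intros simp: algebra_simps power2_eq_square)
    have lnq: "ln (2 * pi * tau / (sig^2 * Vxx)) = L - (a * m^2 + g)"
    proof -
      have "2 * pi * tau / (sig^2 * Vxx) = (pi * tau / sig^2) / E" unfolding Vxx_def by simp
      moreover have "pi * tau / sig^2 > 0" using assms by simp
      moreover have "ln ((pi * tau / sig^2) / E) = ln (pi * tau / sig^2) - ln E"
        using Epos \<open>pi * tau / sig^2 > 0\<close> by (intro ln_divide_pos)
      moreover have "ln E = a * m^2 + g" by (simp add: E_def)
      ultimately show ?thesis unfolding L_def by simp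
    qed
    have sq: "(m * Vx x m + P * Vxm)^2 / (2 * Vxx) = E*m^2*(1+2*P*a)^2*(x-w)^2"
      unfolding Vx_def Vxm_def Vxx_def E_def[symmetric] using Epos
      by (simp add: field_simps power2_eq_square)
    have h7: "0 = Vt + (Pt P0 t)^2 / 2 * Vmm
                 - (m * Vx x m + Pt P0 t * Vxm)^2 / (2 * Vxx)
                 - tau / 2 * ln (2 * pi * tau / (sig^2 * Vxx))"
      unfolding P_def[symmetric] sq lnq Vt_def Vmm_def by (rule final_alg)
    show "\<exists>Vx Vm :: real \<Rightarrow> real \<Rightarrow> real. \<exists>Vt Vxx Vmm Vxm :: real.
             ((\<lambda>s. V s x m) has_real_derivative Vt) (at t within {0..T}) \<and>
             (\<forall>y n. ((\<lambda>z. V t z n) has_real_derivative Vx y n) (at y)) \<and>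
             (\<forall>y n. ((\<lambda>k. V t y k) has_real_derivative Vm y n) (at n)) \<and>
             ((\<lambda>y. Vx y m) has_real_derivative Vxx) (at x) \<and>
             ((\<lambda>n. Vx x n) has_real_derivative Vxm) (at m) \<and>
             ((\<lambda>n. Vm x n) has_real_derivative Vmm) (at m) \<and>
             0 = Vt + (Pt P0 t)^2 / 2 * Vmm
                 - (m * Vx x m + Pt P0 t * Vxm)^2 / (2 * Vxx)
                 - tau / 2 * ln (2 * pi * tau / (sig^2 * Vxx))"
      using h1 h2 h3 h4 h5 h6 h7 by blast
  qed
  show "\<forall>x m. V T x m = (x - w)^2"
  proof -
    have "1 + P0 * T > 0" using assms(1,2) by (simp add: add_pos_pos)
    then show ?thesis by (simp add: V_def Vfun_def alpha_def gamma_def eta_def zeta_def power2_eq_square)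
  qed
qed

end
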